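(* Let $A$ and $B$ be commutative associative unital algebras over $\mathbb{C}$ or $\mathbb{R}$, let $n\ge 0$ be an integer, and let $\mathbf{f}\colon A\to B$ be an $n$-homomorphism. Then for every $a\in A$, $$\operatorname{ber}_{\mathbf{f}}(a)=\psi_n(\mathbf{f},a),$$ where $\operatorname{ber}_{\mathbf{f}}(a)=1+\psi_1(\mathbf{f},a-1)+\psi_2(\mathbf{f},a-1)+\dots+\psi_n(\mathbf{f},a-1)$.
   Context: For a linear map $\mathbf{f}\colon A\to B$, its characteristic function is the formal power series $R(\mathbf{f},a,z)=\exp\bigl(\mathbf{f}(\ln(1+az))\bigr)\in B[[z]]$, where $\ln(1+az)=\sum_{k\ge1}(-1)^{k-1}a^kz^k/k$ and $\mathbf{f}$ is applied coefficientwise; write $R(\mathbf{f},a,z)=1+\psi_1(\mathbf{f},a)z+\psi_2(\mathbf{f},a)z^2+\cdots$. Equivalently, $\psi_1(\mathbf{f},a)=\mathbf{f}(a)$ and $\psi_{k+1}(\mathbf{f},a)=\frac{1}{k+1}\bigl(\mathbf{f}(a)\psi_k(\mathbf{f},a)-\mathbf{f}(a^2)\psi_{k-1}(\mathbf{f},a)+\mathbf{f}(a^3)\psi_{k-2}(\mathbf{f},a)-\cdots\bigr)$, with $\psi_0=1$. A linear map $\mathbf{f}$ is an $n$-homomorphism if $\mathbf{f}(1)=n$ and $R(\mathbf{f},a,z)$ is a polynomial in $z$ of degree at most $n$ for every $a\in A$ (i.e. $\psi_k(\mathbf{f},a)=0$ for all $k>n$ and all $a$). For such $\mathbf{f}$,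 the $\mathbf{f}$-Berezinian is $\operatorname{ber}_{\mathbf{f}}(a)=\exp\mathbf{f}(\ln a):=R(\mathbf{f},a-1,1)=\sum_{k=0}^{n}\psi_k(\mathbf{f},a-1)$. *)

theory Defs
  imports "HOL-Analysis.Analysis"
begin

text \<open>Coefficients psi_k(f,a) of the characteristic function R(f,a,z) = exp f(ln(1+az)),
  given by the Newton-type recursion
  psi_0 = 1,  psi_(k+1) = 1/(k+1) * (f(a) psi_k - f(a^2) psi_(k-1) + ... ).\<close>
fun psi :: "('a::{comm_ring_1,real_algebra_1} \<Rightarrow> 'b::{comm_ring_1,real_algebra_1}) \<Rightarrow> 'a \<Rightarrow> nat \<Rightarrow> 'b" where
  "psi f a 0 = 1"
| "psi f a (Suc k) =
     (1 / real (Suc k)) *\<^sub>R (\<Sum>i\<in>{..k}. (-1) ^ i * f (a ^ (Suc i)) * psi f a (k - i))"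

definition n_homomorphism ::
  "nat \<Rightarrow> ('a::{comm_ring_1,real_algebra_1} \<Rightarrow> 'b::{comm_ring_1,real_algebra_1}) \<Rightarrow> bool" where
  "n_homomorphism n f \<longleftrightarrow> linear f \<and> f 1 = of_nat n \<and> (\<forall>a k. n < k \<longrightarrow> psi f a k = 0)"

definition ber :: "nat \<Rightarrow> ('a::{comm_ring_1,real_algebra_1} \<Rightarrow> 'b::{comm_ring_1,real_algebra_1}) \<Rightarrow> 'a \<Rightarrow> 'b" where
  "ber n f a = (\<Sum>k\<in>{0..n}. psi f (a - 1) k)"

end

theory Submission
  imports Defs "HOL-Computational_Algebra.Polynomial_FPS"
begin

unbundle no vec_syntax
unbundle fps_syntax



lemma prod_comp_lemma:
  fixes a b c d :: "'a::comm_ring_1 fps"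
  assumes c0: "c$ 0 = 0" and d0: "d$ 0 = 0"
  shows "((a oo c) * (b oo d)) $ n =
    sum (\<lambda>(k,m). a $ k * b $ m * (c^k * d^m) $ n) {(k,m). k + m \<le> n}"  (is "?l = ?r")
proof -
  let ?S = "{(k::nat, m::nat). k + m \<le> n}"
  have s: "?S \<subseteq> {0..n} \<times> {0..n}" by (simp add: subset_eq)
  have f: "finite {(k::nat, m::nat). k + m \<le> n}"
    by (auto intro: finite_subset[OF s])
  have "?r = (\<Sum>(k, m) \<in> {(k, m). k + m \<le> n}. \<Sum>j = 0..n. a $ k * b $ m * (c ^ k $ j * d ^ m $ (n - j)))"
    by (simp add: fps_mult_nth sum_distrib_left)
  also have "\<dots> = (\<Sum>i = 0..n. \<Sum>(k,m)\<in>{(k,m). k+m \<le> n}. a $ k * c ^ k $ i * b $ m * d ^ m $ (n-i))"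
    unfolding sum.swap [where A = "{0..n}"] by (auto simp add: ac_simps intro: sum.cong)
  also have "... = (\<Sum>i = 0..n.
                    \<Sum>q = 0..i. \<Sum>j = 0..n - i. a $ q * c ^ q $ i * (b $ j * d ^ j $ (n - i)))"
    apply (rule sum.cong [OF refl])
    apply (simp add: sum.cartesian_product mult.assoc)
    apply (rule sum.mono_neutral_right[OF f], force)
    using startsby_zero_power_prefix[OF c0] startsby_zero_power_prefix[OF d0]
    by clarsimp (metis leI mult_zero_left mult_zero_right)
  also have "\<dots> = ?l"
    by (simp add: fps_mult_nth fps_compose_nth sum_product)
  finally show ?thesis by simp
qed

lemma comp_mult:
  fixes a b c :: "'a::comm_ring_1 fps"
  assumes c0: "c $ 0 = 0"
  shows "(a * b) oo c = (a oo c) * (b oo c)"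
proof -
  have "((a oo c) * (b oo c)) $ n = sum (\<lambda>s. sum (\<lambda>i. a $ i * b $ (s - i) * (c^s) $ n) {0..s}) {0..n}" for n
  unfolding prod_comp_lemma[OF c0 c0] power_add[symmetric]
  unfolding sum_pair_less_iff[where a = "\<lambda>k. a $ k" and b="\<lambda>m. b $ m" and c="\<lambda>s. (c ^ s) $ n" and n = n] ..
  then show ?thesis
    by (simp add: fps_eq_iff fps_compose_nth fps_mult_nth sum_distrib_right)
qed

lemma comp_power:
  fixes a c :: "'a::comm_ring_1 fps"
  assumes c0: "c $ 0 = 0"
  shows "(a ^ k) oo c = (a oo c) ^ k"
  by (induction k) (simp_all add: comp_mult[OF c0])



definition ofr :: "real fps \<Rightarrow> 'c::real_algebra_1 fps" where
  "ofr r = Abs_fps (\<lambda>n. of_real (r $ n))"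

lemma ofr_nth[simp]: "ofr r $ n = of_real (r $ n)" by (simp add: ofr_def)

lemma ofr_mult: "ofr (r * s) = (ofr r * ofr s :: 'c::{real_algebra_1,comm_ring_1} fps)"
  by (simp add: fps_eq_iff fps_mult_nth)

lemma ofr_add: "ofr (r + s) = (ofr r + ofr s :: 'c::{real_algebra_1,comm_ring_1} fps)"
  by (simp add: fps_eq_iff)

lemma ofr_diff: "ofr (r - s) = (ofr r - ofr s :: 'c::{real_algebra_1,comm_ring_1} fps)"
  by (simp add: fps_eq_iff)

lemma ofr_one: "ofr 1 = (1 :: 'c::{real_algebra_1,comm_ring_1} fps)"
  by (simp add: fps_eq_iff)

lemma ofr_X: "ofr fps_X = (fps_X :: 'c::{real_algebra_1,comm_ring_1} fps)"
  by (simp add: fps_eq_iff fps_X_def)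

lemma ofr_power: "ofr (r ^ k) = (ofr r ^ k :: 'c::{real_algebra_1,comm_ring_1} fps)"
  by (induction k) (simp_all add: ofr_one ofr_mult)

definition uR :: "real fps" where "uR = Abs_fps (\<lambda>n. if n = 0 then 0 else 1)"

lemma uu0[simp]: "(ofr uR :: 'c::{real_algebra_1,comm_ring_1} fps) $ 0 = 0"
  by (simp add: uR_def)

lemma uR_eq: "(1 - fps_X) * uR = fps_X"
proof -
  have "(1 - fps_X) * uR = uR - fps_X * uR" by (simp add: algebra_simps)
  also have "\<dots> = fps_X"
    by (simp add: fps_eq_iff uR_def fps_X_mult_nth)
  finally show ?thesis .
qed

lemma uu_eq: "(1 - fps_X) * (ofr uR) = (fps_X :: 'c::{real_algebra_1,comm_ring_1} fps)"
  using arg_cong[OF uR_eq, where f="ofr :: real fps \<Rightarrow> 'c fps"] by (simp add: ofr_mult ofr_diff ofr_one ofr_X)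

definition fm :: "('a \<Rightarrow> 'b) \<Rightarrow> 'a fps \<Rightarrow> 'b fps" where
  "fm f F = Abs_fps (\<lambda>n. f (F $ n))"

lemma fm_nth[simp]: "fm f F $ n = f (F $ n)" by (simp add: fm_def)

context
  fixes f :: "'a::{comm_ring_1,real_algebra_1} \<Rightarrow> 'b::{comm_ring_1,real_algebra_1}"
  assumes lin: "linear f"
begin

lemma lin_ofreal: "f (of_real c * x) = of_real c * f x"
  using linear_scale[OF lin, of c x] by (simp add: scaleR_conv_of_real)

lemma lin_ofreal': "f (x * of_real c) = f x * of_real c"
  using lin_ofreal[of c x] by (simp add: mult.commute)

lemma fm_add: "fm f (F + G) = fm f F + fm f G"
  by (simp add: fps_eq_iff linear_add[OF lin])

lemma fm_diff: "fm f (F - G) = fm f F - fm f G"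
  by (simp add: fps_eq_iff linear_diff[OF lin])

lemma fm_uminus: "fm f (- F) = - fm f F"
  by (simp add: fps_eq_iff linear_neg[OF lin])

lemma fm_ofr_mult: "fm f (ofr r * F) = ofr r * fm f F"
  by (simp add: fps_eq_iff fps_mult_nth linear_sum[OF lin] lin_ofreal)

lemma fm_ofr: "fm f (ofr r) = ofr r * fps_const (f 1)"
  using lin_ofreal[of _ 1] by (simp add: fps_eq_iff)

lemma fm_comp: "fm f (F oo ofr r) = fm f F oo ofr r"
  by (simp add: fps_eq_iff fps_compose_nth linear_sum[OF lin] lin_ofreal' 
      flip: ofr_power)

end



definition Lc :: "'a::{comm_ring_1,real_algebra_1} \<Rightarrow> 'a fps" where
  "Lc c = Abs_fps (\<lambda>i. (-1)^i * c^(Suc i))"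

lemma Lc_eq: "(1 + fps_const c * fps_X) * Lc c = fps_const c"
proof -
  have "(1 + fps_const c * fps_X) * Lc c = Lc c + fps_const c * (fps_X * Lc c)"
    by (simp add: algebra_simps)
  also have "\<dots> = fps_const c"
  proof (rule fps_ext)
    fix n show "(Lc c + fps_const c * (fps_X * Lc c)) $ n = fps_const c $ n"
      by (cases n) (simp_all add: Lc_def fps_X_mult_nth)
  qed
  finally show ?thesis .
qed

lemma unit_cancel:
  fixes P F G :: "'a::comm_ring_1 fps"
  assumes "W * P = 1" "P * F = P * G" shows "F = G"
proof -
  have "W * (P * F) = W * (P * G)" using assms(2) by simp
  then show ?thesis using assms(1) by (simp add: mult.assoc[symmetric])
qed

lemma comp_lin:
  fixes u :: "'a::comm_ring_1 fps"
  assumes "u $ 0 = 0"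
  shows "(1 + fps_const c * fps_X) oo u = 1 + fps_const c * u"
  using assms by (simp add: fps_compose_add_distrib comp_mult)

lemma ring_aux: "(1 - y)^2 * (x - 1) = - (1 - y) * (1 + (x - 1) * y) + (1 - y) * (x::'a::comm_ring_1)"
  by (simp add: algebra_simps power2_eq_square)

lemma A_id:
  fixes a :: "'a::{comm_ring_1,real_algebra_1}"
  shows "(1 - fps_X)^2 * Lc (a-1) = - (1 - fps_X) + (Lc a oo ofr uR)"
proof -
  define u :: "'a fps" where "u = ofr uR"
  define P :: "'a fps" where "P = 1 + fps_const (a-1) * fps_X"
  define W :: "'a fps" where "W = Abs_fps (\<lambda>k. (1-a)^k)"
  have u0: "u $ 0 = 0" by (simp add: u_def uR_def)
  have uq: "(1 - fps_X) * u = fps_X" by (simp add: u_def uu_eq)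
  have WP: "W * P = 1"
  proof -
    have "W * P = W + fps_const (a - 1) * (fps_X * W)" by (simp add: P_def algebra_simps)
    also have "\<dots> = 1"
    proof (rule fps_ext)
      fix n show "(W + fps_const (a - 1) * (fps_X * W)) $ n = 1 $ n"
        by (cases n) (simp_all add: W_def fps_X_mult_nth algebra_simps)
    qed
    finally show ?thesis .
  qed
  have h1: "P * ((1 - fps_X)^2 * Lc (a-1)) = (1 - fps_X)^2 * fps_const (a-1)"
    using Lc_eq[of "a-1"] unfolding P_def by (metis mult.left_commute)
  have h2: "P = (1 - fps_X) * (1 + fps_const a * u)"
  proof -
    have "(1 - fps_X) * (1 + fps_const a * u) = 1 - fps_X + fps_const a * ((1 - fps_X) * u)"
      by (simp add: algebra_simps)
    also have "\<dots> = P" unfolding uq P_def by (simp add: algebra_simps flip: fps_const_sub)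
    finally show ?thesis by simp
  qed
  have h3: "(1 + fps_const a * u) * (Lc a oo u) = fps_const a"
  proof -
    have "((1 + fps_const a * fps_X) * Lc a) oo u = fps_const a"
      by (simp add: Lc_eq)
    then show ?thesis by (simp add: comp_mult[OF u0] comp_lin[OF u0])
  qed
  have h5: "P * (Lc a oo u) = (1 - fps_X) * fps_const a"
    by (simp only: h2 mult.assoc h3)
  have h4: "P * (- (1 - fps_X) + (Lc a oo u)) = - (1 - fps_X) * P + (1 - fps_X) * fps_const a"
    unfolding h5[symmetric] by (simp only: distrib_left mult.commute mult_minus_left)
  have "P * ((1 - fps_X)^2 * Lc (a-1)) = (1 - fps_X)^2 * fps_const (a-1)" by (rule h1)
  also have "\<dots> = - (1 - fps_X) * P + (1 - fps_X) * fps_const a"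
    unfolding P_def fps_const_sub[symmetric] fps_const_1_eq_1 by (rule ring_aux)
  also have "\<dots> = P * (- (1 - fps_X) + (Lc a oo u))" by (rule h4[symmetric])
  finally have "P * ((1 - fps_X)^2 * Lc (a-1)) = P * (- (1 - fps_X) + (Lc a oo u))" .
  then show ?thesis using unit_cancel[OF WP] by (simp add: u_def)
qed



definition Ps :: "('a::{comm_ring_1,real_algebra_1} \<Rightarrow> 'b::{comm_ring_1,real_algebra_1}) \<Rightarrow> 'a \<Rightarrow> 'b fps" where
  "Ps f c = Abs_fps (psi f c)"

lemma of_nat_scale: "(of_nat m :: 'b::real_algebra_1) * y = real m *\<^sub>R y"
  by (simp add: scaleR_conv_of_real)

context
  fixes f :: "'a::{comm_ring_1,real_algebra_1} \<Rightarrow> 'b::{comm_ring_1,real_algebra_1}"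
  assumes lin: "linear f"
begin

lemma Tc_nth: "fm f (Lc c) $ i = (-1)^i * f (c ^ Suc i)"
proof -
  have "fm f (Lc c) $ i = f (of_real ((-1)^i) * c ^ Suc i)" by (simp add: Lc_def)
  also have "\<dots> = of_real ((-1)^i) * f (c ^ Suc i)" by (rule lin_ofreal[OF lin])
  finally show ?thesis by simp
qed

lemma Ps_ode: "fps_deriv (Ps f c) = fm f (Lc c) * Ps f c"
proof (rule fps_ext)
  fix k
  have "fps_deriv (Ps f c) $ k = of_nat (Suc k) * psi f c (Suc k)"
    by (simp add: Ps_def)
  also have "\<dots> = (\<Sum>i\<in>{..k}. (-1) ^ i * f (c ^ (Suc i)) * psi f c (k - i))"
    by (simp only: psi.simps of_nat_scale scaleR_scaleR) simp
  also have "\<dots> = (fm f (Lc c) * Ps f c) $ k"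
    by (simp add: fps_mult_nth Tc_nth Ps_def atLeast0AtMost del: fm_nth)
  finally show "fps_deriv (Ps f c) $ k = (fm f (Lc c) * Ps f c) $ k" .
qed

lemma Ps_unique:
  assumes G0: "G $ 0 = 1" and GD: "fps_deriv G = fm f (Lc c) * G"
  shows "G = Ps f c"
proof -
  have "G $ k = psi f c k" for k
  proof (induction k rule: less_induct)
    case (less k)
    show ?case
    proof (cases k)
      case 0 then show ?thesis using G0 by simp
    next
      case (Suc m)
      have "of_nat (Suc m) * G $ Suc m = fps_deriv G $ m" by simp
      also have "\<dots> = (\<Sum>i=0..m. fm f (Lc c) $ i * G $ (m - i))"
        by (simp add: GD fps_mult_nth)
      also have "\<dots> = (\<Sum>i=0..m. fm f (Lc c) $ i * psi f c (m - i))"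
        using less Suc by (intro sum.cong refl) auto
      also have "\<dots> = (\<Sum>i\<in>{..m}. (-1) ^ i * f (c ^ (Suc i)) * psi f c (m - i))"
        by (simp add: Tc_nth atLeast0AtMost del: fm_nth)
      finally have e: "real (Suc m) *\<^sub>R G $ Suc m = (\<Sum>i\<in>{..m}. (-1) ^ i * f (c ^ (Suc i)) * psi f c (m - i))"
        by (simp only: of_nat_scale)
      have "G $ Suc m = (1 / real (Suc m)) *\<^sub>R (real (Suc m) *\<^sub>R G $ Suc m)"
        by simp
      also have "\<dots> = psi f c (Suc m)" by (simp only: e psi.simps)
      finally show ?thesis using Suc by simp
    qed
  qed
  then show ?thesis by (simp add: fps_eq_iff Ps_def)
qed

end


lemma ofr_1mX: "ofr (1 - fps_X) = (1 - fps_X :: 'c::{real_algebra_1,comm_ring_1} fps)"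
  by (simp add: ofr_diff ofr_one ofr_X)

lemma ofr_1mX2: "ofr ((1 - fps_X)^2) = ((1 - fps_X)^2 :: 'c::{real_algebra_1,comm_ring_1} fps)"
  by (simp add: ofr_power ofr_1mX)

lemma cancel_1mX2:
  fixes F G :: "'c::comm_ring_1 fps"
  assumes "(1 - fps_X)^2 * F = (1 - fps_X)^2 * G" shows "F = G"
proof -
  define W :: "'c fps" where "W = Abs_fps (\<lambda>_. 1)"
  have W1: "W * (1 - fps_X) = 1"
  proof -
    have "W * (1 - fps_X) = W - fps_X * W" by (simp add: algebra_simps)
    also have "\<dots> = 1" by (simp add: fps_eq_iff W_def fps_X_mult_nth)
    finally show ?thesis .
  qed
  have "W^2 * (1 - fps_X)^2 = 1" using W1 by (simp add: power_mult_distrib[symmetric])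
  then show ?thesis using unit_cancel[OF _ assms] by blast
qed

lemma u_deriv: "(1 - fps_X)^2 * fps_deriv (ofr uR) = (1 :: 'c::{real_algebra_1,comm_ring_1} fps)"
proof -
  let ?u = "ofr uR :: 'c fps"
  have "fps_deriv ((1 - fps_X) * ?u) = fps_deriv fps_X" by (simp only: uu_eq)
  moreover have uq: "?u = fps_X + fps_X * ?u"
    using uu_eq[where 'c='c] by (simp add: algebra_simps)
  ultimately have "(1 - fps_X) * fps_deriv ?u = 1 + ?u"
    by (simp add: algebra_simps)
  then have "(1 - fps_X)^2 * fps_deriv ?u = (1 - fps_X) * (1 + ?u)"
    by (simp add: power2_eq_square mult.assoc)
  also have "\<dots> = 1" by (simp only: distrib_left uu_eq) simp
  finally show ?thesis .
qed

theorem main_aux: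
  fixes f :: "'a::{comm_ring_1,real_algebra_1} \<Rightarrow> 'b::{comm_ring_1,real_algebra_1}"
    and n :: nat
  assumes hom: "n_homomorphism n f"
  shows "ber n f a = psi f a n"
proof -
  have lin: "linear f" and f1: "f 1 = of_nat n" and vanish: "\<And>c k. n < k \<Longrightarrow> psi f c k = 0"
    using hom by (auto simp: n_homomorphism_def)
  define u :: "'b fps" where "u = ofr uR"
  have u0: "u $ 0 = 0" by (simp add: u_def uR_def)
  define e where "e = psi f a"
  define T where "T = fm f (Lc a)"
  define S where "S = fm f (Lc (a - 1))"
  define E where "E = Ps f a"
  have S_id: "(1 - fps_X)^2 * S = - (of_nat n) * (1 - fps_X) + (T oo u)"
  proof -
    have "fm f ((1 - fps_X)^2 * Lc (a-1)) = fm f (- (1 - fps_X) + (Lc a oo ofr uR))"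
      by (simp only: A_id)
    also have "fm f ((1 - fps_X)^2 * Lc (a-1)) = (1 - fps_X)^2 * S"
      using fm_ofr_mult[OF lin, of "(1 - fps_X)^2" "Lc (a-1)"] by (simp only: ofr_1mX2 S_def)
    also have "fm f (- (1 - fps_X) + (Lc a oo ofr uR)) = - (of_nat n) * (1 - fps_X) + (T oo u)"
    proof -
      have "fm f (1 - fps_X) = (1 - fps_X) * fps_const (of_nat n)"
        using fm_ofr[OF lin, of "1 - fps_X"] by (simp only: ofr_1mX f1)
      then show ?thesis
        by (simp only: fm_add[OF lin] fm_uminus[OF lin] fm_comp[OF lin])
           (simp add: T_def u_def fps_of_nat mult.commute)
    qed
    finally show ?thesis .
  qed
  have E_ode: "fps_deriv E = T * E" unfolding E_def T_def by (rule Ps_ode[OF lin])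
  have E_poly: "E = (\<Sum>k\<le>n. fps_const (e k) * fps_X ^ k)"
  proof (rule fps_ext)
    fix m
    show "E $ m = (\<Sum>k\<le>n. fps_const (e k) * fps_X ^ k) $ m"
    proof -
      have "(\<Sum>k\<le>n. fps_const (e k) * fps_X ^ k) $ m = (\<Sum>k\<le>n. if m = k then e k else (0::'b))"
        unfolding fps_sum_nth by (rule sum.cong[OF refl]) simp
      also have "\<dots> = (if m \<le> n then e m else 0)"
        by (simp add: sum.delta)
      finally show ?thesis using vanish[of m a] by (simp add: E_def Ps_def e_def)
    qed
  qed
  define PE where "PE = E oo u"
  have PE_eq: "PE = (\<Sum>k\<le>n. fps_const (e k) * u ^ k)"
    unfolding PE_def E_poly fps_compose_sum_distrib
    by (simp add: comp_mult[OF u0] comp_power[OF u0] u0)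
  have PEd: "(1 - fps_X)^2 * fps_deriv PE = (T oo u) * PE"
  proof -
    have "(1 - fps_X)^2 * fps_deriv PE = (\<Sum>k\<le>n. fps_const (e k) * (of_nat k * u ^ (k - 1)))"
      unfolding PE_eq fps_deriv_sum sum_distrib_left
    proof (intro sum.cong refl)
      fix k
      have ud: "(1 - fps_X)^2 * fps_deriv u = 1" unfolding u_def by (rule u_deriv)
      have "(1 - fps_X)^2 * fps_deriv (fps_const (e k) * u ^ k)
          = fps_const (e k) * of_nat k * u ^ (k - 1) * ((1 - fps_X)^2 * fps_deriv u)"
        by (simp add: fps_deriv_power' ac_simps)
      also have "\<dots> = fps_const (e k) * (of_nat k * u ^ (k - 1))"
        by (simp add: ud mult.assoc)
      finally show "(1 - fps_X)^2 * fps_deriv (fps_const (e k) * u ^ k) = fps_const (e k) * (of_nat k * u ^ (k - 1))" .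
    qed
    also have "\<dots> = fps_deriv E oo u"
      unfolding E_poly fps_deriv_sum fps_compose_sum_distrib
      by (intro sum.cong refl)
         (simp add: fps_deriv_power' comp_mult[OF u0] comp_power[OF u0] u0 flip: fps_of_nat)
    also have "\<dots> = (T oo u) * PE"
      by (simp add: E_ode comp_mult[OF u0] PE_def)
    finally show ?thesis .
  qed
  define G where "G = (1 - fps_X)^n * PE"
  have G_ode: "fps_deriv G = S * G"
  proof (rule cancel_1mX2)
    have pw: "(of_nat n :: 'b fps) * (1 - fps_X) ^ (n - 1) * (1 - fps_X) = of_nat n * (1 - fps_X) ^ n"
      by (cases n) (simp_all add: mult.assoc mult.commute)
    have "(1 - fps_X)^2 * fps_deriv G
        = - (of_nat n * (1 - fps_X) ^ (n - 1) * (1 - fps_X)) * (1 - fps_X) * PE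
          + (1 - fps_X)^n * ((1 - fps_X)^2 * fps_deriv PE)"
      unfolding G_def by (simp add: fps_deriv_power' power2_eq_square algebra_simps)
    also have "\<dots> = - (of_nat n * (1 - fps_X)) * G + (T oo u) * G"
      unfolding pw PEd G_def by (simp add: algebra_simps)
    also have "\<dots> = ((1 - fps_X)^2 * S) * G"
      unfolding S_id by (simp add: algebra_simps)
    finally show "(1 - fps_X)^2 * fps_deriv G = (1 - fps_X)^2 * (S * G)"
      by (simp add: mult.assoc)
  qed
  have G0: "G $ 0 = 1"
    by (simp add: G_def PE_def E_def Ps_def fps_nth_power_0)
  have GP: "G = Ps f (a - 1)"
    using Ps_unique[OF lin G0] G_ode unfolding S_def by blast
  define Gp :: "'b poly" where
    "Gp = (\<Sum>k\<le>n. [:e k:] * [:0, 1:] ^ k * (1 - [:0, 1:]) ^ (n - k))"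
  have G_Gp: "G = fps_of_poly Gp"
  proof -
    have "G = (\<Sum>k\<le>n. fps_const (e k) * ((1 - fps_X)^n * u ^ k))"
      unfolding G_def PE_eq sum_distrib_left by (simp add: algebra_simps)
    also have "\<dots> = (\<Sum>k\<le>n. fps_const (e k) * (fps_X ^ k * (1 - fps_X) ^ (n - k)))"
    proof (intro sum.cong refl)
      fix k assume "k \<in> {..n}"
      define Y :: "'b fps" where "Y = 1 - fps_X"
      from \<open>k \<in> {..n}\<close> have "Y^n = Y^k * Y^(n-k)"
        by (simp flip: power_add)
      then have "Y^n * u ^ k = (Y * u)^k * Y^(n-k)"
        by (simp only: power_mult_distrib ac_simps)
      then have "(1 - fps_X)^n * u ^ k = ((1 - fps_X) * u)^k * (1 - fps_X :: 'b fps)^(n-k)"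
        by (simp only: Y_def)
      then show "fps_const (e k) * ((1 - fps_X)^n * u ^ k) = fps_const (e k) * (fps_X ^ k * (1 - fps_X) ^ (n - k))"
        by (simp add: u_def uu_eq)
    qed
    also have "\<dots> = fps_of_poly Gp"
      unfolding Gp_def fps_of_poly_sum fps_of_poly_mult fps_of_poly_power fps_of_poly_diff
        fps_of_poly_const fps_of_poly_fps_X fps_of_poly_1
      by (simp add: mult.assoc)
    finally show ?thesis .
  qed
  have coeffGp: "coeff Gp m = psi f (a - 1) m" for m
    using arg_cong[OF G_Gp, of "\<lambda>F. F $ m"] GP by (simp add: Ps_def)
  have "ber n f a = (\<Sum>m\<le>n. coeff Gp m)"
    by (simp add: ber_def coeffGp atLeast0AtMost)
  also have "\<dots> = poly Gp 1"
  proof -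
    have "(\<Sum>m\<le>n. coeff Gp m) = (\<Sum>m\<le>max n (degree Gp). coeff Gp m)"
      by (rule sum.mono_neutral_left) (auto simp: coeffGp vanish)
    also have "\<dots> = (\<Sum>m\<le>degree Gp. coeff Gp m)"
      by (rule sum.mono_neutral_right) (auto simp: coeff_eq_0)
    finally show ?thesis by (simp add: poly_altdef)
  qed
  also have "\<dots> = e n"
  proof -
    have "poly Gp 1 = (\<Sum>k\<le>n. e k * (0::'b) ^ (n - k))"
      unfolding Gp_def poly_sum by simp
    also have "\<dots> = (\<Sum>k\<in>{n}. e k * (0::'b) ^ (n - k))"
      by (rule sum.mono_neutral_right) (auto simp: power_0_left)
    finally show ?thesis by simp
  qed
  finally show ?thesis by (simp add: e_def)
qed



theorem mainTheorem1:
  fixes f :: "'a::{comm_ring_1,real_algebra_1} \<Rightarrow> 'b::{comm_ring_1,real_algebra_1}"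
    and n :: nat
  assumes "n_homomorphism n f"
  shows "\<forall>a. ber n f a = psi f a n"
  using main_aux[OF assms] by blast

end
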